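(* Consider the multiset combinatorial auction model described in the context, and an auction that first asks demand queries and then value queries, whose allocation after any set of reports is a solution of the winner determination problem (WDP) on the inferred values. In such an auction, adding value queries can reduce efficiency, and the efficiency drop can be arbitrarily close to $100\%$: for every $\delta>0$ there exist an instance, a finite set of demand queries with truthful responses after which the WDP allocation has efficiency $1$, and one value query per bidder (answered truthfully) such that, after adding these value-query responses, the WDP allocation has efficiency less than $\delta$.
   Context: Multiset combinatorial auction: bidders $N=\{1,\dots,n\}$, items $M=\{1,\dots,m\}$ with capacities $c\in\mathbb{N}^m$. Bundles are $x\in\mathcal{X}=\{0,\dots,c_1\}\times\cdots\times\{0,\dots,c_m\}$. Each bidder $i$ has a value function $v_i:\mathcal{X}\to\mathbb{R}_{\ge0}$. Feasible allocations: $\mathcal{F}=\{a\in\mathcal{X}^n:\sum_i a_{ij}\le c_j\ \forall j\}$. Social welfare $V(a)=\sum_i v_i(a_i)$; efficiency of $a$ is $V(a)/\max_{a'\in\mathcal{F}}V(a')$. A demand query at prices $p\in\mathbb{R}^m_{\ge0}$ is answered truthfully by bidder $i$ with some $x_i^*(p)\in\arg\max_{x\in\mathcal{X}}\{v_i(x)-\langle p,x\rangle\}$; a value query for $x$ is answered with $v_i(x)$. With reports $R_i$ consisting of demand responses $R_i^{DQ}$ (pairs $(x,p)$) and value responses $R_i^{VQ}$ (pairs $(x,v_i(x))$), the inferred value is $\tilde v_i(x;R_i)=v_i(x)$ if $x$ appears in $R_i^{VQ}$ and otherwise $\max(\{\langle x,p\rangle:(x,p)\in R_i^{DQ}\}\cup\{0\})$.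 The WDP allocation is $a^*(R)\in\arg\max_{a\in\mathcal{F}}\sum_i\tilde v_i(a_i;R_i)$. *)

theory Defs
  imports Complex_Main
begin

(* Items are 0..m-1, bidders 0..n-1. A bdl is a function nat => nat that is
  bounded by the capacities on items j < m and zero outside the item set. *)

type_synonym bdl = "nat \<Rightarrow> nat"
type_synonym prices = "nat \<Rightarrow> real"

definition bundles :: "nat \<Rightarrow> (nat \<Rightarrow> nat) \<Rightarrow> bdl set" where
  "bundles m c = {x. (\<forall>j<m. x j \<le> c j) \<and> (\<forall>j\<ge>m. x j = 0)}"

definition ip :: "nat \<Rightarrow> prices \<Rightarrow> bdl \<Rightarrow> real" where
  "ip m p x = (\<Sum>j<m. p j * real (x j))"

definition valid_prices :: "nat \<Rightarrow> prices \<Rightarrow> bool" where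
  "valid_prices m p \<longleftrightarrow> (\<forall>j<m. 0 \<le> p j)"

definition is_demand :: "nat \<Rightarrow> (nat \<Rightarrow> nat) \<Rightarrow> (bdl \<Rightarrow> real) \<Rightarrow> prices \<Rightarrow> bdl \<Rightarrow> bool" where
  "is_demand m c vi p x \<longleftrightarrow> x \<in> bundles m c \<and>
     (\<forall>y\<in>bundles m c. vi y - ip m p y \<le> vi x - ip m p x)"

definition feasible :: "nat \<Rightarrow> nat \<Rightarrow> (nat \<Rightarrow> nat) \<Rightarrow> (nat \<Rightarrow> bdl) set" where
  "feasible n m c = {a. (\<forall>i<n. a i \<in> bundles m c) \<and> (\<forall>i\<ge>n. a i = (\<lambda>_. 0))
                        \<and> (\<forall>j<m. (\<Sum>i<n. a i j) \<le> c j)}"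

definition welfare :: "nat \<Rightarrow> (nat \<Rightarrow> bdl \<Rightarrow> real) \<Rightarrow> (nat \<Rightarrow> bdl) \<Rightarrow> real" where
  "welfare n v a = (\<Sum>i<n. v i (a i))"

definition opt_welfare :: "nat \<Rightarrow> nat \<Rightarrow> (nat \<Rightarrow> nat) \<Rightarrow> (nat \<Rightarrow> bdl \<Rightarrow> real) \<Rightarrow> real" where
  "opt_welfare n m c v = Max (welfare n v ` feasible n m c)"

definition efficiency :: "nat \<Rightarrow> nat \<Rightarrow> (nat \<Rightarrow> nat) \<Rightarrow> (nat \<Rightarrow> bdl \<Rightarrow> real) \<Rightarrow> (nat \<Rightarrow> bdl) \<Rightarrow> real" where
  "efficiency n m c v a = welfare n v a / opt_welfare n m c v"

definition inferred :: "nat \<Rightarrow> (bdl \<Rightarrow> real) \<Rightarrow> (bdl \<times> prices) set \<Rightarrow> bdl set \<Rightarrow> bdl \<Rightarrow> real" where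
  "inferred m vi DQ VQ x =
     (if x \<in> VQ then vi x else Max ({ip m p x | p. (x, p) \<in> DQ} \<union> {0}))"

definition is_WDP :: "nat \<Rightarrow> nat \<Rightarrow> (nat \<Rightarrow> nat) \<Rightarrow> (nat \<Rightarrow> bdl \<Rightarrow> real) \<Rightarrow> (nat \<Rightarrow> bdl) \<Rightarrow> bool" where
  "is_WDP n m c vt a \<longleftrightarrow> a \<in> feasible n m c \<and>
     (\<forall>a'\<in>feasible n m c. welfare n vt a' \<le> welfare n vt a)"

end

theory Submission
  imports Defs
begin

definition ABb :: bdl where "ABb = (\<lambda>j. if j < 2 then 1 else 0)"
definition Ab :: bdl where "Ab = (\<lambda>j. if j = 0 then 1 else 0)"
definition Zb :: bdl where "Zb = (\<lambda>_. 0)"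
definition vv :: "real \<Rightarrow> nat \<Rightarrow> bdl \<Rightarrow> real" where
  "vv e i x = (if i = 0 then (if 1 \<le> x 0 \<and> 1 \<le> x 1 then 1 else 0)
               else (if 1 \<le> x 0 then e else 0))"
definition cc :: "nat \<Rightarrow> nat" where "cc = (\<lambda>_. 1)"

lemma bund: "x \<in> bundles 2 cc \<longleftrightarrow> x 0 \<le> 1 \<and> x 1 \<le> 1 \<and> (\<forall>j\<ge>2. x j = 0)"
  unfolding bundles_def cc_def
  by (auto simp: less_2_cases_iff)

lemma ip2: "ip 2 p x = p 0 * real (x 0) + p 1 * real (x 1)"
  by (simp add: ip_def numeral_2_eq_2)

lemma eqAB: "x \<in> bundles 2 cc \<Longrightarrow> x = ABb \<longleftrightarrow> x 0 = 1 \<and> x 1 = 1"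
  unfolding bund ABb_def
  apply (rule iffI)
   apply simp
  apply (rule ext)
  subgoal for j by (cases "j < 2") (auto simp: less_2_cases_iff)
  done

lemma eqA: "x \<in> bundles 2 cc \<Longrightarrow> x = Ab \<longleftrightarrow> x 0 = 1 \<and> x 1 = 0"
  unfolding bund Ab_def
  apply (rule iffI)
   apply simp
  apply (rule ext)
  subgoal for j by (cases "j < 2") (auto simp: less_2_cases_iff)
  done

lemma bundles_ABb: "ABb \<in> bundles 2 cc" "Ab \<in> bundles 2 cc" "Zb \<in> bundles 2 cc"
  by (auto simp: bund ABb_def Ab_def Zb_def)

lemma feas: "a \<in> feasible 2 2 cc \<longleftrightarrow> a 0 \<in> bundles 2 cc \<and> a 1 \<in> bundles 2 cc \<and>
   (\<forall>i\<ge>2. a i = (\<lambda>_. 0)) \<and> a 0 0 + a 1 0 \<le> 1 \<and> a 0 1 + a 1 1 \<le> 1"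
  unfolding feasible_def
  apply (rule iffI)
   apply (simp add: numeral_2_eq_2)
  apply (auto simp: cc_def)
  subgoal for i by (cases i; cases "i = 1") auto
  subgoal for j by (cases j; cases "j = 1") (auto simp: numeral_2_eq_2)
  done

lemma welf: "welfare 2 v a = v 0 (a 0) + v 1 (a 1)"
  by (simp add: welfare_def numeral_2_eq_2)

lemma dqset: "{(f k, [p] ! k) | k. k < length [p]} = {(f 0, p)}"
  by auto

lemma inf1: "inferred m vi {(r, p)} V x =
   (if x \<in> V then vi x else if x = r then max (ip m p x) 0 else 0)"
proof -
  have "{ip m p' x | p'. (x, p') \<in> {(r, p)}} \<union> {0} = (if x = r then {ip m p x, 0} else {0})"
    by auto
  then show ?thesis unfolding inferred_def by (auto simp: max_def)
qed



lemma ZAf: "Zb \<noteq> ABb" "Zb \<noteq> Ab" "Ab \<noteq> ABb"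
proof -
  have "Zb 0 \<noteq> ABb 0" "Zb 0 \<noteq> Ab 0" "Ab 1 \<noteq> ABb 1" by (simp_all add: Zb_def ABb_def Ab_def)
  then show "Zb \<noteq> ABb" "Zb \<noteq> Ab" "Ab \<noteq> ABb" by metis+
qed

definition GG :: "nat \<Rightarrow> bdl" where "GG = (\<lambda>i. if i = 0 then ABb else Zb)"
definition BB :: "nat \<Rightarrow> bdl" where "BB = (\<lambda>i. if i = 1 then Ab else Zb)"

lemma GG_feas: "GG \<in> feasible 2 2 cc"
  by (auto simp: feas GG_def bundles_ABb) (auto simp: ABb_def Zb_def)

lemma BB_feas: "BB \<in> feasible 2 2 cc"
  by (auto simp: feas BB_def bundles_ABb) (auto simp: Ab_def Zb_def)

lemma welf_le1:
  assumes "0 \<le> e" "e \<le> 1" "a \<in> feasible 2 2 cc"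
  shows "welfare 2 (vv e) a \<le> 1"
  using assms unfolding welf feas by (auto simp: vv_def)

lemma opt1:
  assumes "0 \<le> e" "e \<le> 1"
  shows "opt_welfare 2 2 cc (vv e) = 1"
  unfolding opt_welfare_def
proof (rule Max_eqI)
  have "welfare 2 (vv e) ` feasible 2 2 cc \<subseteq> {0, 1, e, 1 + e}"
    by (auto simp: welf vv_def)
  then show "finite (welfare 2 (vv e) ` feasible 2 2 cc)" by (rule finite_subset) simp
  show "\<And>y. y \<in> welfare 2 (vv e) ` feasible 2 2 cc \<Longrightarrow> y \<le> 1"
    using welf_le1[OF assms] by auto
  have "welfare 2 (vv e) GG = 1"
    by (simp add: welf vv_def GG_def ABb_def Zb_def)
  then show "1 \<in> welfare 2 (vv e) ` feasible 2 2 cc"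
    using GG_feas by force
qed

theorem lemmaD7:
  fixes \<delta> :: real
  assumes "\<delta> > 0"
  shows "\<exists>(n::nat) (m::nat) (c::nat \<Rightarrow> nat) (v::nat \<Rightarrow> bdl \<Rightarrow> real)
           (P::prices list) (resp::nat \<Rightarrow> nat \<Rightarrow> bdl) (q::nat \<Rightarrow> bdl).
     (\<forall>i<n. \<forall>x\<in>bundles m c. 0 \<le> v i x) \<and>
     (\<forall>k<length P. valid_prices m (P ! k)) \<and>
     (\<forall>i<n. \<forall>k<length P. is_demand m c (v i) (P ! k) (resp i k)) \<and>
     (\<forall>i<n. q i \<in> bundles m c) \<and>
     (\<forall>a. is_WDP n m c
            (\<lambda>i. inferred m (v i) {(resp i k, P ! k) | k. k < length P} {}) a
          \<longrightarrow> efficiency n m c v a = 1) \<and>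
     (\<forall>a. is_WDP n m c
            (\<lambda>i. inferred m (v i) {(resp i k, P ! k) | k. k < length P} {q i}) a
          \<longrightarrow> efficiency n m c v a < \<delta>)"
proof -
  define e where "e = min \<delta> 1 / 2"
  have e0: "0 < e" and e1: "e < 1" and ed: "e < \<delta>" using assms by (auto simp: e_def)
  define p :: prices where "p = (\<lambda>_. e / 4)"
  define resp :: "nat \<Rightarrow> nat \<Rightarrow> bdl" where "resp = (\<lambda>i k. if i = 0 then ABb else Ab)"
  define q :: "nat \<Rightarrow> bdl" where "q = (\<lambda>i. if i = 0 then Zb else Ab)"
  have c1: "\<forall>i<2. \<forall>x\<in>bundles 2 cc. 0 \<le> vv e i x" using e0 by (auto simp: vv_def)
  have c2: "\<forall>k<length [p]. valid_prices 2 ([p] ! k)" using e0 by (auto simp: valid_prices_def p_def)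
  have c3: "\<forall>i<2. \<forall>k<length [p]. is_demand 2 cc (vv e i) ([p] ! k) (resp i k)"
  proof (intro allI impI)
    fix i k :: nat assume i: "i < 2" and k: "k < length [p]"
    then have k0: "k = 0" by simp
    show "is_demand 2 cc (vv e i) ([p] ! k) (resp i k)" unfolding is_demand_def k0
    proof (intro conjI ballI)
      show "resp i 0 \<in> bundles 2 cc" by (simp add: resp_def bundles_ABb)
      fix y assume "y \<in> bundles 2 cc"
      then have "y 0 = 0 \<or> y 0 = 1" "y 1 = 0 \<or> y 1 = 1" by (auto simp: bund)
      then show "vv e i y - ip 2 ([p] ! 0) y \<le> vv e i (resp i 0) - ip 2 ([p] ! 0) (resp i 0)"
        using e0 e1 by (cases "y 0 = 0"; cases "y 1 = 0"; cases "i = 0")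
          (simp_all add: vv_def resp_def ip2 p_def ABb_def Ab_def)
    qed
  qed
  have c4: "\<forall>i<2. q i \<in> bundles 2 cc" by (auto simp: q_def bundles_ABb)
  have opt: "opt_welfare 2 2 cc (vv e) = 1" using opt1 e0 e1 by simp
  have c5: "\<forall>a. is_WDP 2 2 cc
            (\<lambda>i. inferred 2 (vv e i) {(resp i k, [p] ! k) | k. k < length [p]} {}) a
          \<longrightarrow> efficiency 2 2 cc (vv e) a = 1"
  proof (intro allI impI)
    fix a assume W: "is_WDP 2 2 cc
            (\<lambda>i. inferred 2 (vv e i) {(resp i k, [p] ! k) | k. k < length [p]} {}) a"
    let ?t = "\<lambda>i. inferred 2 (vv e i) {(resp i 0, p)} {}"
    have af: "a \<in> feasible 2 2 cc" and le: "welfare 2 ?t GG \<le> welfare 2 ?t a"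
      using W GG_feas unfolding is_WDP_def dqset by auto
    have ipAB: "ip 2 p ABb = e / 2" by (simp add: ip2 p_def ABb_def)
    have ipA: "ip 2 p Ab = e / 4" by (simp add: ip2 p_def Ab_def)
    have ZA: "Zb \<noteq> ABb" "Zb \<noteq> Ab" using ZAf by blast+
    have "welfare 2 ?t GG = e / 2"
      using e0 ZA by (simp add: welf inf1 GG_def resp_def ipAB)
    moreover have "welfare 2 ?t a = (if a 0 = ABb then e / 2 else 0) + (if a 1 = Ab then e / 4 else 0)"
      using e0 by (simp add: welf inf1 resp_def ipAB ipA)
    ultimately have "a 0 = ABb" using le e0 by (auto split: if_splits)
    then have "a 0 0 = 1" "a 0 1 = 1" using eqAB af by (auto simp: feas)
    then have "a 1 0 = 0" using af by (auto simp: feas)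
    then have "welfare 2 (vv e) a = 1" using \<open>a 0 0 = 1\<close> \<open>a 0 1 = 1\<close> by (simp add: welf vv_def)
    then show "efficiency 2 2 cc (vv e) a = 1" by (simp add: efficiency_def opt)
  qed
  have c6: "\<forall>a. is_WDP 2 2 cc
            (\<lambda>i. inferred 2 (vv e i) {(resp i k, [p] ! k) | k. k < length [p]} {q i}) a
          \<longrightarrow> efficiency 2 2 cc (vv e) a < \<delta>"
  proof (intro allI impI)
    fix a assume W: "is_WDP 2 2 cc
            (\<lambda>i. inferred 2 (vv e i) {(resp i k, [p] ! k) | k. k < length [p]} {q i}) a"
    let ?t = "\<lambda>i. inferred 2 (vv e i) {(resp i 0, p)} {q i}"
    have af: "a \<in> feasible 2 2 cc" and le: "welfare 2 ?t BB \<le> welfare 2 ?t a"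
      using W BB_feas unfolding is_WDP_def dqset by auto
    have ipAB: "ip 2 p ABb = e / 2" by (simp add: ip2 p_def ABb_def)
    have ZA: "Zb \<noteq> ABb" "Ab \<noteq> ABb" using ZAf by blast+
    have "welfare 2 ?t BB = e"
      using e0 ZA by (simp add: welf inf1 BB_def resp_def q_def vv_def Zb_def Ab_def)
    moreover have "welfare 2 ?t a \<le> (if a 0 = ABb then e / 2 else 0) + (if a 1 = Ab then e else 0)"
      using e0 ZA by (auto simp: welf inf1 resp_def ipAB q_def vv_def Zb_def Ab_def)
    ultimately have "a 1 = Ab" using le e0 by (auto split: if_splits)
    then have "a 1 0 = 1" "a 1 1 = 0" using eqA af by (auto simp: feas)
    then have "a 0 0 = 0" using af by (auto simp: feas)
    then have "welfare 2 (vv e) a = e" using \<open>a 1 0 = 1\<close> by (simp add: welf vv_def)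
    then show "efficiency 2 2 cc (vv e) a < \<delta>" using ed by (simp add: efficiency_def opt)
  qed
  show ?thesis
    apply (rule exI[of _ 2], rule exI[of _ 2], rule exI[of _ cc], rule exI[of _ "vv e"])
    apply (rule exI[of _ "[p]"], rule exI[of _ resp], rule exI[of _ q])
    using c1 c2 c3 c4 c5 c6 by blast
qed

end
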